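(* Let $G$ be a finite simple graph, $\alpha=\alpha(G)$, $g_j$ the number of independent sets of $G$ of size $j$ ($1\le j\le \alpha$), and $g=\sum_{j=1}^{\alpha}(-1)^{j-1}g_j$. For $0\le s\le \alpha-1$ set $D_s=\sum_{j=s+1}^{\alpha}(-1)^{j-1-s}g_j\binom{j}{j-1-s}$. If $g=1$, then $\deg h_{R/I(G)}(t)=\alpha-d'-1$, where $d'=\min\{s: 0\le s\le\alpha-1,\ D_s\neq 0\}$.
   Context: An independent set of $G$ is a set of pairwise non-adjacent vertices; $\alpha(G)$ is the maximum size of one. For $G$ on vertices $x_1,\dots,x_n$, $R=k[x_1,\dots,x_n]$ over a field $k$, $I(G)=(x_ix_j:\{x_i,x_j\}\in E(G))$, and $h_{R/I(G)}(t)$ is the numerator of the Hilbert series of $R/I(G)$ written as a reduced fraction $h_{R/I(G)}(t)/(1-t)^{\dim R/I(G)}$. *)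

theory Defs
  imports "HOL-Computational_Algebra.Computational_Algebra"
begin

definition simple_graph :: "'a set \<Rightarrow> ('a \<Rightarrow> 'a \<Rightarrow> bool) \<Rightarrow> bool" where
  "simple_graph V E \<longleftrightarrow> finite V \<and> (\<forall>u v. E u v \<longrightarrow> u \<in> V \<and> v \<in> V)
     \<and> (\<forall>u v. E u v \<longrightarrow> E v u) \<and> (\<forall>v. \<not> E v v)"

definition indep_set :: "'a set \<Rightarrow> ('a \<Rightarrow> 'a \<Rightarrow> bool) \<Rightarrow> 'a set \<Rightarrow> bool" where
  "indep_set V E S \<longleftrightarrow> S \<subseteq> V \<and> (\<forall>u\<in>S. \<forall>v\<in>S. \<not> E u v)"

definition indep_number :: "'a set \<Rightarrow> ('a \<Rightarrow> 'a \<Rightarrow> bool) \<Rightarrow> nat" where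
  "indep_number V E = Max (card ` {S. indep_set V E S})"

definition indep_count :: "'a set \<Rightarrow> ('a \<Rightarrow> 'a \<Rightarrow> bool) \<Rightarrow> nat \<Rightarrow> nat" where
  "indep_count V E j = card {S. indep_set V E S \<and> card S = j}"

text \<open>Monomials of R = k[x_v : v \<in> V] are exponent vectors m supported on V. Since I(G) is a monomial ideal, the monomials not in I(G)
  form a k-basis of R/I(G); hence the Hilbert function of R/I(G) in degree d is
  the number of degree-d monomials outside I(G) (independent of the field k).\<close>
definition standard_monomials :: "'a set \<Rightarrow> ('a \<Rightarrow> 'a \<Rightarrow> bool) \<Rightarrow> nat \<Rightarrow> ('a \<Rightarrow> nat) set" where
  "standard_monomials V E d = {m. (\<forall>v. v \<notin> V \<longrightarrow> m v = 0) \<and> (\<Sum>v\<in>V. m v) = d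
      \<and> \<not> (\<exists>u\<in>V. \<exists>v\<in>V. E u v \<and> m u \<ge> 1 \<and> m v \<ge> 1)}"

definition hilbert_function :: "'a set \<Rightarrow> ('a \<Rightarrow> 'a \<Rightarrow> bool) \<Rightarrow> nat \<Rightarrow> nat" where
  "hilbert_function V E d = card (standard_monomials V E d)"

definition hilbert_series :: "'a set \<Rightarrow> ('a \<Rightarrow> 'a \<Rightarrow> bool) \<Rightarrow> int fps" where
  "hilbert_series V E = Abs_fps (\<lambda>d. int (hilbert_function V E d))"

definition h_polynomial :: "'a set \<Rightarrow> ('a \<Rightarrow> 'a \<Rightarrow> bool) \<Rightarrow> int poly" where
  "h_polynomial V E = (THE p. \<exists>D::nat. hilbert_series V E * (1 - fps_X) ^ D = fps_of_poly p
        \<and> poly p 1 \<noteq> 0)"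

end

theory Submission
  imports Defs
begin


definition posm :: "'a set \<Rightarrow> nat \<Rightarrow> ('a \<Rightarrow> nat) set" where
 "posm S d = {m. (\<forall>v. v \<notin> S \<longrightarrow> m v = 0) \<and> (\<forall>v\<in>S. m v \<ge> 1) \<and> (\<Sum>v\<in>S. m v) = d}"

lemma finite_posm:
  assumes "finite S" shows "finite (posm S d)"
proof -
  have "posm S d \<subseteq> {f. \<forall>x. (x \<in> S \<longrightarrow> f x \<in> {0..d}) \<and> (x \<notin> S \<longrightarrow> f x = 0)}"
  proof
    fix m assume m: "m \<in> posm S d"
    show "m \<in> {f. \<forall>x. (x \<in> S \<longrightarrow> f x \<in> {0..d}) \<and> (x \<notin> S \<longrightarrow> f x = 0)}"
    proof (clarsimp, intro conjI allI impI)
      fix x assume "x \<in> S"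
      then have "m x \<le> (\<Sum>v\<in>S. m v)" using assms by (intro member_le_sum) auto
      then show "m x \<le> d" using m by (simp add: posm_def)
    next
      fix x assume "x \<notin> S" then show "m x = 0" using m by (simp add: posm_def)
    qed
  qed
  then show ?thesis by (rule finite_subset) (intro finite_set_of_finite_funs assms, simp)
qed

lemma posm_empty: "posm {} d = (if d = 0 then {\<lambda>_. 0} else {})"
  by (auto simp: posm_def)

lemma posm_insert:
  assumes "finite S" "a \<notin> S"
  shows "posm (insert a S) d = (\<Union>i\<in>{1..d}. (\<lambda>m. m(a := i)) ` posm S (d - i))"
proof (intro equalityI subsetI)
  fix m assume m: "m \<in> posm (insert a S) d"
  let ?m = "m(a := 0)"
  have s: "(\<Sum>v\<in>S. ?m v) = (\<Sum>v\<in>S. m v)" using assms by (intro sum.cong) auto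
  have d: "d = m a + (\<Sum>v\<in>S. m v)" using m assms by (simp add: posm_def)
  have "?m \<in> posm S (d - m a)" using m s d assms(2) by (auto simp: posm_def)
  moreover have "m a \<in> {1..d}" using m d by (auto simp: posm_def)
  moreover have "m = ?m(a := m a)" by simp
  ultimately show "m \<in> (\<Union>i\<in>{1..d}. (\<lambda>m. m(a := i)) ` posm S (d - i))" by blast
next
  fix m assume "m \<in> (\<Union>i\<in>{1..d}. (\<lambda>m. m(a := i)) ` posm S (d - i))"
  then obtain i m' where i: "i \<in> {1..d}" and m': "m' \<in> posm S (d - i)" and mm: "m = m'(a := i)" by blast
  have s: "(\<Sum>v\<in>S. m v) = (\<Sum>v\<in>S. m' v)" using assms mm by (intro sum.cong) auto
  show "m \<in> posm (insert a S) d" using i m' s mm assms by (auto simp: posm_def)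
qed

lemma card_posm_insert:
  assumes "finite S" "a \<notin> S"
  shows "card (posm (insert a S) d) = (\<Sum>i\<in>{1..d}. card (posm S (d - i)))"
proof -
  have "card (posm (insert a S) d) = (\<Sum>i\<in>{1..d}. card ((\<lambda>m. m(a := i)) ` posm S (d - i)))"
    unfolding posm_insert[OF assms]
  proof (rule card_UN_disjoint)
    show "finite {1..d}" by simp
    show "\<forall>i\<in>{1..d}. finite ((\<lambda>m. m(a := i)) ` posm S (d - i))" using finite_posm[OF assms(1)] by auto
    show "\<forall>i\<in>{1..d}. \<forall>j\<in>{1..d}. i \<noteq> j \<longrightarrow> (\<lambda>m. m(a := i)) ` posm S (d - i) \<inter> (\<lambda>m. m(a := j)) ` posm S (d - j) = {}"
      by (auto dest: fun_cong[where x=a])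
  qed
  also have "\<dots> = (\<Sum>i\<in>{1..d}. card (posm S (d - i)))"
  proof (intro sum.cong refl card_image inj_onI)
    fix i x y assume "x \<in> posm S (d - i)" "y \<in> posm S (d - i)" "x(a := i) = y(a := i)"
    then have "x a = 0" "y a = 0" using assms(2) unfolding posm_def by auto
    show "x = y"
    proof
      fix v show "x v = y v"
      proof (cases "v = a")
        case True then show ?thesis using \<open>x a = 0\<close> \<open>y a = 0\<close> by simp
      next
        case False then show ?thesis using fun_cong[OF \<open>x(a := i) = y(a := i)\<close>, of v] by simp
      qed
    qed
  qed
  finally show ?thesis .
qed

definition Qf :: "int fps" where "Qf = Abs_fps (\<lambda>i. if i = 0 then 0 else 1)"

lemma fps_posm:
  assumes "finite S"
  shows "Abs_fps (\<lambda>d. int (card (posm S d))) = Qf ^ card S"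
  using assms
proof (induction S rule: finite_induct)
  case empty
  show ?case by (intro fps_ext) (simp add: posm_empty)
next
  case (insert a S)
  have "Abs_fps (\<lambda>d. int (card (posm (insert a S) d))) = Qf * Abs_fps (\<lambda>d. int (card (posm S d)))"
  proof (intro fps_ext)
    fix d
    have "(Qf * Abs_fps (\<lambda>d. int (card (posm S d)))) $ d = (\<Sum>i=0..d. (if i = 0 then 0 else 1) * int (card (posm S (d - i))))"
      by (simp add: fps_mult_nth Qf_def)
    also have "\<dots> = (\<Sum>i=1..d. int (card (posm S (d - i))))"
      by (simp add: sum.atLeast_Suc_atMost atLeastAtMost_iff)
    also have "\<dots> = int (card (posm (insert a S) d))"
      by (simp add: card_posm_insert[OF insert(1,2)])
    finally show "Abs_fps (\<lambda>d. int (card (posm (insert a S) d))) $ d = (Qf * Abs_fps (\<lambda>d. int (card (posm S d)))) $ d" by simp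
  qed
  then show ?case using insert by simp
qed

lemma Qf_mult: "Qf * (1 - fps_X) = fps_X"
proof -
  have "Qf * (1 - fps_X) = Qf - fps_X * Qf" by (simp add: right_diff_distrib mult.commute)
  also have "\<dots> = fps_X"
  proof (intro fps_ext)
    fix n show "(Qf - fps_X * Qf) $ n = (fps_X :: int fps) $ n"
      by (cases n) (auto simp: Qf_def fps_X_nth)
  qed
  finally show ?thesis .
qed



lemma finite_IS: assumes "simple_graph V E" shows "finite {S. indep_set V E S}"
proof -
  have "{S. indep_set V E S} \<subseteq> Pow V" by (auto simp: indep_set_def)
  then show ?thesis using assms by (auto simp: simple_graph_def intro: finite_subset)
qed

lemma IS_finite_set: assumes "simple_graph V E" "indep_set V E S" shows "finite S"
  using assms by (auto simp: simple_graph_def indep_set_def intro: finite_subset)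

lemma std_eq:
  assumes G: "simple_graph V E"
  shows "standard_monomials V E d = (\<Union>S\<in>{S. indep_set V E S}. posm S d)"
proof (intro equalityI subsetI)
  fix m assume m: "m \<in> standard_monomials V E d"
  let ?S = "{v. m v \<noteq> 0}"
  have sub: "?S \<subseteq> V" using m by (auto simp: standard_monomials_def)
  have ind: "indep_set V E ?S" unfolding indep_set_def
  proof (intro conjI sub ballI)
    fix u v assume "u \<in> ?S" "v \<in> ?S"
    then have "u \<in> V" "v \<in> V" "m u \<ge> 1" "m v \<ge> 1" using sub by auto
    then show "\<not> E u v" using m by (auto simp: standard_monomials_def)
  qed
  have fV: "finite V" using G by (simp add: simple_graph_def)
  have "(\<Sum>v\<in>?S. m v) = (\<Sum>v\<in>V. m v)" using sub fV by (intro sum.mono_neutral_left) auto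
  then have "m \<in> posm ?S d" using m by (auto simp: posm_def standard_monomials_def)
  with ind show "m \<in> (\<Union>S\<in>{S. indep_set V E S}. posm S d)" by blast
next
  fix m assume "m \<in> (\<Union>S\<in>{S. indep_set V E S}. posm S d)"
  then obtain S where S: "indep_set V E S" and m: "m \<in> posm S d" by blast
  have sub: "S \<subseteq> V" using S by (simp add: indep_set_def)
  have fV: "finite V" using G by (simp add: simple_graph_def)
  have "(\<Sum>v\<in>S. m v) = (\<Sum>v\<in>V. m v)" using sub fV m by (intro sum.mono_neutral_left) (auto simp: posm_def)
  moreover have "\<not> (\<exists>u\<in>V. \<exists>v\<in>V. E u v \<and> m u \<ge> 1 \<and> m v \<ge> 1)"
  proof
    assume "\<exists>u\<in>V. \<exists>v\<in>V. E u v \<and> m u \<ge> 1 \<and> m v \<ge> 1"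
    then obtain u v where "E u v" "m u \<ge> 1" "m v \<ge> 1" by blast
    then have "u \<in> S" "v \<in> S" using m by (auto simp: posm_def)
    then show False using S \<open>E u v\<close> by (auto simp: indep_set_def)
  qed
  ultimately show "m \<in> standard_monomials V E d" using m sub by (auto simp: posm_def standard_monomials_def)
qed

lemma hf_eq:
  assumes G: "simple_graph V E"
  shows "hilbert_function V E d = (\<Sum>S\<in>{S. indep_set V E S}. card (posm S d))"
  unfolding hilbert_function_def std_eq[OF G]
proof (rule card_UN_disjoint)
  show "finite {S. indep_set V E S}" using finite_IS[OF G] .
  show "\<forall>S\<in>{X. indep_set V E X}. finite (posm S d)"
    using IS_finite_set[OF G] finite_posm by blast
  show "\<forall>S\<in>{X. indep_set V E X}. \<forall>T\<in>{X. indep_set V E X}. S \<noteq> T \<longrightarrow> posm S d \<inter> posm T d = {}"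
  proof (intro ballI impI)
    fix S T :: "'a set" assume "S \<noteq> T"
    show "posm S d \<inter> posm T d = {}"
    proof (rule ccontr)
      assume "posm S d \<inter> posm T d \<noteq> {}"
      then obtain m where "m \<in> posm S d" "m \<in> posm T d" by blast
      then have "S = {v. m v \<noteq> 0}" "T = {v. m v \<noteq> 0}" by (auto simp: posm_def)
      then show False using \<open>S \<noteq> T\<close> by simp
    qed
  qed
qed

lemma HS_eq:
  assumes G: "simple_graph V E"
  shows "hilbert_series V E = (\<Sum>S\<in>{S. indep_set V E S}. Qf ^ card S)"
proof (intro fps_ext)
  fix d
  have "(\<Sum>S\<in>{S. indep_set V E S}. Qf ^ card S) $ d = (\<Sum>S\<in>{S. indep_set V E S}. int (card (posm S d)))"
    unfolding fps_sum_nth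
  proof (intro sum.cong refl)
    fix S assume "S \<in> {S. indep_set V E S}"
    then have "finite S" using IS_finite_set[OF G] by auto
    show "(Qf ^ card S) $ d = int (card (posm S d))" using fps_posm[OF \<open>finite S\<close>, symmetric] by simp
  qed
  then show "hilbert_series V E $ d = (\<Sum>S\<in>{S. indep_set V E S}. Qf ^ card S) $ d"
    by (simp add: hilbert_series_def hf_eq[OF G])
qed

lemma card_le_alpha:
  assumes G: "simple_graph V E" "indep_set V E S"
  shows "card S \<le> indep_number V E"
  unfolding indep_number_def using assms finite_IS[OF G(1)] by (intro Max_ge) auto

lemma alpha_attained:
  assumes G: "simple_graph V E"
  shows "\<exists>S. indep_set V E S \<and> card S = indep_number V E"
proof -
  have "{} \<in> {S. indep_set V E S}" by (simp add: indep_set_def)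
  then have "indep_number V E \<in> card ` {S. indep_set V E S}"
    unfolding indep_number_def using finite_IS[OF G] by (intro Max_in) auto
  then show ?thesis by auto
qed

lemma g_alpha_pos:
  assumes G: "simple_graph V E"
  shows "indep_count V E (indep_number V E) > 0"
proof -
  have "finite {S. indep_set V E S \<and> card S = indep_number V E}"
    using finite_IS[OF G] by (rule finite_subset[rotated]) auto
  then show ?thesis using alpha_attained[OF G] unfolding indep_count_def by (auto simp: card_gt_0_iff)
qed

lemma g_zero:
  assumes G: "simple_graph V E"
  shows "indep_count V E 0 = 1"
proof -
  have "{S. indep_set V E S \<and> card S = 0} = {{}}"
    using IS_finite_set[OF G] by (auto simp: indep_set_def)
  then show ?thesis by (simp add: indep_count_def)
qed

lemma sum_by_card:
  fixes f :: "nat \<Rightarrow> 'b::comm_semiring_1"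
  assumes G: "simple_graph V E"
  shows "(\<Sum>S\<in>{S. indep_set V E S}. f (card S)) = (\<Sum>j\<le>indep_number V E. of_nat (indep_count V E j) * f j)"
proof -
  have "(\<Sum>S\<in>{S. indep_set V E S}. f (card S)) =
      (\<Sum>j\<le>indep_number V E. \<Sum>S\<in>{S \<in> {S. indep_set V E S}. card S = j}. f (card S))"
    by (rule sum.group[symmetric]) (use finite_IS[OF G] card_le_alpha[OF G] in auto)
  also have "\<dots> = (\<Sum>j\<le>indep_number V E. of_nat (indep_count V E j) * f j)"
  proof (intro sum.cong refl)
    fix j
    have "(\<Sum>S\<in>{S \<in> {S. indep_set V E S}. card S = j}. f (card S)) = (\<Sum>S\<in>{S \<in> {S. indep_set V E S}. card S = j}. f j)"
      by (intro sum.cong) auto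
    also have "\<dots> = of_nat (indep_count V E j) * f j" by (simp add: indep_count_def)
    finally show "(\<Sum>S\<in>{S \<in> {S. indep_set V E S}. card S = j}. f (card S)) = of_nat (indep_count V E j) * f j" .
  qed
  finally show ?thesis .
qed

definition Np :: "'a set \<Rightarrow> ('a \<Rightarrow> 'a \<Rightarrow> bool) \<Rightarrow> int poly" where
  "Np V E = (\<Sum>S\<in>{S. indep_set V E S}. monom 1 (card S) * [:1,-1:] ^ (indep_number V E - card S))"

lemma one_minus_X: "fps_of_poly [:1, -1:] = (1 - fps_X :: int fps)"
  by (simp add: fps_of_poly_pCons)

lemma HS_N:
  assumes G: "simple_graph V E"
  shows "hilbert_series V E * (1 - fps_X) ^ indep_number V E = fps_of_poly (Np V E)"
proof -
  have "hilbert_series V E * (1 - fps_X) ^ indep_number V E =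
     (\<Sum>S\<in>{S. indep_set V E S}. Qf ^ card S * (1 - fps_X) ^ indep_number V E)"
    by (simp add: HS_eq[OF G] sum_distrib_right)
  also have "\<dots> = (\<Sum>S\<in>{S. indep_set V E S}. fps_of_poly (monom 1 (card S) * [:1,-1:] ^ (indep_number V E - card S)))"
  proof (intro sum.cong refl)
    fix S assume "S \<in> {S. indep_set V E S}"
    then have le: "card S \<le> indep_number V E" using card_le_alpha[OF G] by auto
    have "Qf ^ card S * (1 - fps_X) ^ indep_number V E
        = Qf ^ card S * ((1 - fps_X) ^ card S * (1 - fps_X) ^ (indep_number V E - card S))"
      using le by (simp add: power_add[symmetric])
    also have "\<dots> = (Qf * (1 - fps_X)) ^ card S * (1 - fps_X) ^ (indep_number V E - card S)"
      by (simp add: power_mult_distrib mult.assoc)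
    also have "\<dots> = fps_X ^ card S * (1 - fps_X) ^ (indep_number V E - card S)"
      by (simp add: Qf_mult)
    finally show "Qf ^ card S * (1 - fps_X) ^ indep_number V E = fps_of_poly (monom 1 (card S) * [:1,-1:] ^ (indep_number V E - card S))"
      by (simp add: fps_of_poly_mult fps_of_poly_power fps_of_poly_monom' one_minus_X)
  qed
  finally show ?thesis by (simp add: Np_def fps_of_poly_sum)
qed

lemma N_at_1:
  assumes G: "simple_graph V E"
  shows "poly (Np V E) 1 = int (indep_count V E (indep_number V E))"
proof -
  have "poly (Np V E) 1 = (\<Sum>S\<in>{S. indep_set V E S}. (0::int) ^ (indep_number V E - card S))"
    by (simp add: Np_def poly_sum poly_monom)
  also have "\<dots> = (\<Sum>j\<le>indep_number V E. of_nat (indep_count V E j) * (0::int) ^ (indep_number V E - j))"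
    by (rule sum_by_card[OF G])
  also have "\<dots> = (\<Sum>j\<le>indep_number V E. if j = indep_number V E then int (indep_count V E j) else 0)"
    by (intro sum.cong refl) auto
  also have "\<dots> = int (indep_count V E (indep_number V E))" by simp
  finally show ?thesis .
qed

lemma h_eq_N:
  assumes G: "simple_graph V E"
  shows "h_polynomial V E = Np V E"
  unfolding h_polynomial_def
proof (rule the_equality)
  have "poly (Np V E) 1 \<noteq> 0" using N_at_1[OF G] g_alpha_pos[OF G] by simp
  then show "\<exists>D. hilbert_series V E * (1 - fps_X) ^ D = fps_of_poly (Np V E) \<and> poly (Np V E) 1 \<noteq> 0"
    using HS_N[OF G] by blast
next
  fix p assume "\<exists>D. hilbert_series V E * (1 - fps_X) ^ D = fps_of_poly p \<and> poly p 1 \<noteq> 0"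
  then obtain D where D: "hilbert_series V E * (1 - fps_X) ^ D = fps_of_poly p" and p1: "poly p 1 \<noteq> 0" by blast
  define a where "a = indep_number V E"
  define L :: "int poly" where "L = [:1, -1:]"
  have N1: "poly (Np V E) 1 \<noteq> 0" using N_at_1[OF G] g_alpha_pos[OF G] by simp
  have L1: "poly L 1 = 0" by (simp add: L_def)
  have Lnz: "L \<noteq> 0" by (simp add: L_def)
  have "fps_of_poly (p * L ^ a) = hilbert_series V E * (1 - fps_X) ^ (D + a)"
    by (simp add: fps_of_poly_mult fps_of_poly_power L_def one_minus_X D[symmetric] power_add mult.assoc)
  also have "\<dots> = fps_of_poly (Np V E * L ^ D)"
    by (simp add: fps_of_poly_mult fps_of_poly_power L_def one_minus_X HS_N[OF G, symmetric] power_add mult_ac a_def)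
  finally have eq: "p * L ^ a = Np V E * L ^ D" by (simp add: fps_of_poly_eq_iff)
  have "D = a"
  proof (rule ccontr)
    assume "D \<noteq> a"
    then consider "D < a" | "a < D" by linarith
    then show False
    proof cases
      case 1
      then have "p * L ^ (a - D) * L ^ D = Np V E * L ^ D" using eq by (simp add: mult.assoc power_add[symmetric])
      then have "p * L ^ (a - D) = Np V E" using Lnz by simp
      then have "poly (Np V E) 1 = poly p 1 * poly L 1 ^ (a - D)" by (metis poly_mult poly_power)
      then have "poly (Np V E) 1 = 0" using 1 L1 by simp
      then show False using N1 by simp
    next
      case 2
      then have "p * L ^ a = Np V E * L ^ (D - a) * L ^ a" using eq by (simp add: mult.assoc power_add[symmetric])
      then have "p = Np V E * L ^ (D - a)" using Lnz by simp
      then have "poly p 1 = poly (Np V E) 1 * poly L 1 ^ (D - a)" by (metis poly_mult poly_power)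
      then have "poly p 1 = 0" using 2 L1 by simp
      then show False using p1 by simp
    qed
  qed
  then show "p = Np V E" using eq Lnz by simp
qed



definition Mp :: "'a set \<Rightarrow> ('a \<Rightarrow> 'a \<Rightarrow> bool) \<Rightarrow> int poly" where
  "Mp V E = (\<Sum>S\<in>{S. indep_set V E S}. monom 1 (indep_number V E - card S) * [:1,-1:] ^ card S)"

lemma coeffL: "coeff ([:1,-1:] ^ n) i = (-1) ^ i * int (n choose i)"
proof (cases "i \<le> n")
  case True then show ?thesis by (simp add: coeff_linear_poly_power)
next
  case False
  have "degree ([:1,-1::int:] ^ n) \<le> n"
    using degree_power_le[of "[:1,-1::int:]" n] by simp
  then have "coeff ([:1,-1::int:] ^ n) i = 0" using False by (intro coeff_eq_0) simp
  then show ?thesis using False by simp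
qed

lemma pcompose_pow: "pcompose (p ^ n) q = (pcompose p q) ^ n"
  by (induction n) (simp_all add: pcompose_mult pcompose_1)

lemma N_pcompose:
  "Np V E = pcompose (Mp V E) [:1,-1:]"
proof -
  have LL: "pcompose [:1,-1::int:] [:1,-1:] = [:0,1:]" by (simp add: pcompose_pCons)
  have X: "pcompose [:0,1::int:] [:1,-1:] = [:1,-1:]" by (simp add: pcompose_pCons)
  show ?thesis
    unfolding Np_def Mp_def pcompose_sum
  proof (intro sum.cong refl)
    fix S :: "'a set"
    show "monom 1 (card S) * [:1, - 1:] ^ (indep_number V E - card S) = (pcompose (monom 1 (indep_number V E - card S) * [:1, - 1:] ^ card S) [:1, - 1:] :: int poly)"
      unfolding pcompose_mult pcompose_pow monom_altdef smult_1_left LL X by (simp add: mult.commute)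
  qed
qed

lemma degree_N: "degree (Np V E) = degree (Mp V E)"
  unfolding N_pcompose degree_pcompose by simp

lemma coeff_Mp:
  assumes G: "simple_graph V E"
  shows "coeff (Mp V E) n = (\<Sum>j\<le>indep_number V E. int (indep_count V E j) *
     (if n < indep_number V E - j then 0 else (-1) ^ (n - (indep_number V E - j)) * int (j choose (n - (indep_number V E - j)))))"
proof -
  have "coeff (Mp V E) n = (\<Sum>S\<in>{S. indep_set V E S}. (\<lambda>j. (if n < indep_number V E - j then 0 else (-1) ^ (n - (indep_number V E - j)) * int (j choose (n - (indep_number V E - j))))) (card S))"
    unfolding Mp_def coeff_sum by (intro sum.cong refl) (simp add: coeff_monom_mult coeffL)
  also note sum_by_card[OF G]
  finally show ?thesis by simp
qed



lemma coeff_Mp_D: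
  assumes G: "simple_graph V E" and s: "s < indep_number V E"
  shows "coeff (Mp V E) (indep_number V E - 1 - s) =
    (\<Sum>j=s+1..indep_number V E. (-1::int) ^ (j - 1 - s) * int (indep_count V E j) * int (j choose (j - 1 - s)))"
proof -
  let ?a = "indep_number V E"
  have "coeff (Mp V E) (?a - 1 - s) = (\<Sum>j\<le>?a. if j \<in> {s+1..?a} then (-1::int) ^ (j - 1 - s) * int (indep_count V E j) * int (j choose (j - 1 - s)) else 0)"
    unfolding coeff_Mp[OF G]
  proof (intro sum.cong refl)
    fix j assume j: "j \<in> {..?a}"
    show "int (indep_count V E j) * (if ?a - 1 - s < ?a - j then 0 else (-1) ^ (?a - 1 - s - (?a - j)) * int (j choose (?a - 1 - s - (?a - j)))) =
      (if j \<in> {s+1..?a} then (-1::int) ^ (j - 1 - s) * int (indep_count V E j) * int (j choose (j - 1 - s)) else 0)"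
    proof (cases "s + 1 \<le> j")
      case True
      then have "\<not> ?a - 1 - s < ?a - j" "?a - 1 - s - (?a - j) = j - 1 - s" using j s by auto
      then show ?thesis using True j by simp
    next
      case False
      then have "?a - 1 - s < ?a - j" using j s by auto
      then show ?thesis using False by simp
    qed
  qed
  also have "\<dots> = (\<Sum>j\<in>{..?a} \<inter> {s+1..?a}. (-1::int) ^ (j - 1 - s) * int (indep_count V E j) * int (j choose (j - 1 - s)))"
    by (rule sum.inter_restrict[symmetric]) simp
  also have "{..?a} \<inter> {s+1..?a} = {s+1..?a}" by auto
  finally show ?thesis .
qed

lemma coeff_Mp_big:
  assumes G: "simple_graph V E" and n: "n > indep_number V E"
  shows "coeff (Mp V E) n = 0"
  unfolding coeff_Mp[OF G]
proof (intro sum.neutral ballI)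
  fix j assume j: "j \<in> {..indep_number V E}"
  then have "n - (indep_number V E - j) > j" using n by auto
  then show "int (indep_count V E j) * (if n < indep_number V E - j then 0 else (-1) ^ (n - (indep_number V E - j)) * int (j choose (n - (indep_number V E - j)))) = 0"
    by simp
qed

lemma coeff_Mp_a:
  assumes G: "simple_graph V E"
    and h: "(\<Sum>j=1..indep_number V E. (-1::int) ^ (j - 1) * int (indep_count V E j)) = 1"
  shows "coeff (Mp V E) (indep_number V E) = 0"
proof -
  let ?a = "indep_number V E"
  have "coeff (Mp V E) ?a = (\<Sum>j\<le>?a. int (indep_count V E j) * (-1) ^ j)"
    unfolding coeff_Mp[OF G] by (intro sum.cong refl) auto
  also have "\<dots> = (\<Sum>j\<in>insert 0 {1..?a}. int (indep_count V E j) * (-1) ^ j)"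
    by (intro sum.cong refl) auto
  also have "\<dots> = 1 + (\<Sum>j=1..?a. int (indep_count V E j) * (-1) ^ j)"
    by (simp add: g_zero[OF G])
  also have "(\<Sum>j=1..?a. int (indep_count V E j) * (-1) ^ j) = - (\<Sum>j=1..?a. (-1::int) ^ (j - 1) * int (indep_count V E j))"
    unfolding sum_negf[symmetric]
  proof (intro sum.cong refl)
    fix j assume "j \<in> {1..?a}"
    then have "j = Suc (j - 1)" by auto
    then have "(-1::int) ^ j = - ((-1) ^ (j - 1))" by (metis power_Suc mult_minus1)
    then show "int (indep_count V E j) * (-1) ^ j = - ((-1::int) ^ (j - 1) * int (indep_count V E j))" by simp
  qed
  finally show ?thesis using h by simp
qed



theorem corollary3p4:
  fixes V :: "'a set" and E :: "'a \<Rightarrow> 'a \<Rightarrow> bool"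
  assumes "simple_graph V E"
    and "(\<Sum>j=1..indep_number V E. (-1::int) ^ (j - 1) * int (indep_count V E j)) = 1"
  shows "degree (h_polynomial V E) =
    indep_number V E -
      (LEAST s. s \<le> indep_number V E - 1 \<and>
         (\<Sum>j=s+1..indep_number V E.
            (-1::int) ^ (j - 1 - s) * int (indep_count V E j) * int (j choose (j - 1 - s))) \<noteq> 0)
    - 1"
proof -
  note G = assms(1)
  define a where "a = indep_number V E"
  define Ds where "Ds s = (\<Sum>j=s+1..a. (-1::int) ^ (j - 1 - s) * int (indep_count V E j) * int (j choose (j - 1 - s)))" for s
  define P where "P s = (s \<le> a - 1 \<and> Ds s \<noteq> 0)" for s
  define d where "d = (LEAST s. P s)"
  have goal: "?thesis \<longleftrightarrow> degree (Mp V E) = a - d - 1"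
    unfolding h_eq_N[OF G] degree_N d_def P_def Ds_def a_def ..
  have a1: "a \<ge> 1"
  proof (rule ccontr)
    assume "\<not> a \<ge> 1" then have "a = 0" by simp
    then show False using assms(2) by (simp add: a_def)
  qed
  have "Ds (a - 1) = int (indep_count V E a)"
    using a1 by (simp add: Ds_def)
  then have "P (a - 1)" using g_alpha_pos[OF G] by (simp add: P_def a_def)
  then have Pd: "P d" unfolding d_def by (rule LeastI)
  then have da: "d \<le> a - 1" by (simp add: P_def)
  have "d < a" using da a1 by simp
  then have "coeff (Mp V E) (a - 1 - d) = Ds d" unfolding Ds_def a_def by (rule coeff_Mp_D[OF G])
  then have cd: "coeff (Mp V E) (a - 1 - d) \<noteq> 0" using Pd by (simp add: P_def)
  have "\<forall>i > a - 1 - d. coeff (Mp V E) i = 0"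
  proof (intro allI impI)
    fix i assume i: "i > a - 1 - d"
    consider "i > a" | "i = a" | "i < a" by linarith
    then show "coeff (Mp V E) i = 0"
    proof cases
      case 1 then show ?thesis using coeff_Mp_big[OF G] by (simp add: a_def)
    next
      case 2 then show ?thesis using coeff_Mp_a[OF G assms(2)] by (simp add: a_def)
    next
      case 3
      define s where "s = a - 1 - i"
      have s1: "s < d" "s < a" "a - 1 - s = i" using i 3 by (auto simp: s_def)
      have "\<not> P s" unfolding d_def by (rule not_less_Least) (use s1 in \<open>simp add: d_def\<close>)
      then have "Ds s = 0" using s1 by (simp add: P_def)
      moreover have "coeff (Mp V E) (a - 1 - s) = Ds s" unfolding Ds_def a_def by (rule coeff_Mp_D[OF G]) (use s1 in \<open>simp add: a_def\<close>)
      ultimately show ?thesis using s1 by simp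
    qed
  qed
  then have "degree (Mp V E) \<le> a - 1 - d" by (rule degree_le)
  moreover have "a - 1 - d \<le> degree (Mp V E)" using cd by (rule le_degree)
  ultimately show ?thesis using goal by simp
qed

end
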